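(* Suppose $\sigma_x=\sigma_y$ and $\rho\in(0,1)$. Then $(\mathbf a^*,\mathbf b^* )$ is a global pure equilibrium: $K(\mathbf a^*,\mathbf b)\le K(\mathbf a^*,\mathbf b^* )=0\le K(\mathbf a,\mathbf b^* )$ for all $\mathbf a,\mathbf b\in\mathbb R^2$.
   Context: Standing setup. Fix $\sigma_x,\sigma_y>0$ and $\rho\in(-1,1)$, and let $(\xi,\eta)$ be a bivariate normal random vector with mean $(0,0)$ and covariance matrix $\Sigma=\begin{pmatrix}\sigma_x^2&\rho\sigma_x\sigma_y\\ \rho\sigma_x\sigma_y&\sigma_y^2\end{pmatrix}$. Player I (the minimizer) chooses $\mathbf a=(x_1,y_1)\in\mathbb R^2$ and Player II (the maximizer) chooses $\mathbf b=(x_2,y_2)\in\mathbb R^2$. Let $C_1(\mathbf a,\mathbf b)=\{(x,y):(x_1-x)^2+(y_1-y)^2<(x_2-x)^2+(y_2-y)^2\}$ and $C_2(\mathbf a,\mathbf b)=\{(x,y):(x_1-x)^2+(y_1-y)^2>(x_2-x)^2+(y_2-y)^2\}$. The payoff to Player II (paid by Player I) is $K(\mathbf a,\mathbf b)=x_1+y_1$ if $\mathbf a=\mathbf b$, and $K(\mathbf a,\mathbf b)=(x_1+y_1)\,P((\xi,\eta)\in C_1(\mathbf a,\mathbf b))+(x_2+y_2)\,P((\xi,\eta)\in C_2(\mathbf a,\mathbf b))$ if $\mathbf a\neq\mathbf b$. For $\mathbf a=(x,y)$ write $-\mathbf a=(-x,-y)$. Let $x_2^*=\frac{\sqrt{2\pi(\sigma_x^2+2\rho\sigma_x\sigma_y+\sigma_y^2)}}{4}$,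 $\mathbf b^*=(x_2^*,x_2^* )$ and $\mathbf a^*=(-x_2^*,-x_2^* )$. *)

theory Defs
  imports "HOL-Probability.Probability"
begin

text \<open>Density of the centred bivariate normal law with standard deviations
  sx, sy and correlation r (requires sx, sy > 0, -1 < r < 1).\<close>
definition bvn_pdf :: "real \<Rightarrow> real \<Rightarrow> real \<Rightarrow> real \<times> real \<Rightarrow> real" where
  "bvn_pdf sx sy r p =
     (let x = fst p; y = snd p in
       exp (- (x\<^sup>2 / sx\<^sup>2 - 2 * r * x * y / (sx * sy) + y\<^sup>2 / sy\<^sup>2) / (2 * (1 - r\<^sup>2)))
       / (2 * pi * sx * sy * sqrt (1 - r\<^sup>2)))"

definition bvn :: "real \<Rightarrow> real \<Rightarrow> real \<Rightarrow> (real \<times> real) measure" where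
  "bvn sx sy r = density lborel (\<lambda>p. ennreal (bvn_pdf sx sy r p))"

definition cellC1 :: "real \<times> real \<Rightarrow> real \<times> real \<Rightarrow> (real \<times> real) set" where
  "cellC1 a b = {(x, y). (fst a - x)\<^sup>2 + (snd a - y)\<^sup>2 < (fst b - x)\<^sup>2 + (snd b - y)\<^sup>2}"

definition cellC2 :: "real \<times> real \<Rightarrow> real \<times> real \<Rightarrow> (real \<times> real) set" where
  "cellC2 a b = {(x, y). (fst a - x)\<^sup>2 + (snd a - y)\<^sup>2 > (fst b - x)\<^sup>2 + (snd b - y)\<^sup>2}"

text \<open>Payoff K(a,b) to Player II.\<close>
definition payoffK :: "real \<Rightarrow> real \<Rightarrow> real \<Rightarrow> real \<times> real \<Rightarrow> real \<times> real \<Rightarrow> real" where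
  "payoffK sx sy r a b =
     (if a = b then fst a + snd a
      else (fst a + snd a) * measure (bvn sx sy r) (cellC1 a b)
         + (fst b + snd b) * measure (bvn sx sy r) (cellC2 a b))"

definition xstar :: "real \<Rightarrow> real \<Rightarrow> real \<Rightarrow> real" where
  "xstar sx sy r = sqrt (2 * pi * (sx\<^sup>2 + 2 * r * sx * sy + sy\<^sup>2)) / 4"

end

theory Submission
  imports Defs
begin


abbreviation "NN \<equiv> density lborel (\<lambda>x. ennreal (std_normal_density x))"
definition Qf :: "real \<Rightarrow> real" where "Qf z = measure NN {z<..}"

lemma NN_prob: "prob_space NN"
  using prob_space_normal_density[of 1 0] by simp

interpretation NNp: prob_space NN by (rule NN_prob)

lemma emeasure_NN: "A \<in> sets borel \<Longrightarrow> emeasure NN A = (\<integral>\<^sup>+x. indicator A x * ennreal (std_normal_density x) \<partial>lborel)"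
  by (subst emeasure_density) (auto intro!: nn_integral_cong simp: mult.commute)

lemma emeasure_NN_Qf: "emeasure NN {z<..} = ennreal (Qf z)"
  unfolding Qf_def by (rule NNp.emeasure_eq_measure)

lemma Qf_nonneg: "0 \<le> Qf z" unfolding Qf_def by simp
lemma Qf_le1: "Qf z \<le> 1" unfolding Qf_def using NNp.prob_le_1 by simp

lemma std_sym: "std_normal_density (-x) = std_normal_density x"
  by (simp add: std_normal_density_def)

lemma NN_refl: "emeasure NN {..z} = emeasure NN {-z<..}"
proof -
  have "emeasure NN {..z} = (\<integral>\<^sup>+x. indicator {..z} x * ennreal (std_normal_density x) \<partial>lborel)"
    by (rule emeasure_NN) simp
  also have "\<dots> = ennreal \<bar>-1\<bar> * (\<integral>\<^sup>+x. indicator {..z} (0 + -1 * x) * ennreal (std_normal_density (0 + -1 * x)) \<partial>lborel)"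
    by (rule nn_integral_real_affine) auto
  also have "\<dots> = (\<integral>\<^sup>+x. indicator {-z..} x * ennreal (std_normal_density x) \<partial>lborel)"
    by (auto intro!: nn_integral_cong simp: std_sym indicator_def)
  also have "\<dots> = (\<integral>\<^sup>+x. indicator {-z<..} x * ennreal (std_normal_density x) \<partial>lborel)"
    apply (rule nn_integral_cong_AE)
    using AE_lborel_singleton[of "-z"] by eventually_elim (auto simp: indicator_def)
  also have "\<dots> = emeasure NN {-z<..}"
    by (rule emeasure_NN[symmetric]) simp
  finally show ?thesis .
qed

lemma Qf_sym: "Qf (-z) = 1 - Qf z"
proof -
  have "measure NN {..z} = measure NN {-z<..}"
    using NN_refl[of z] by (simp add: measure_def)
  moreover have "measure NN {..z} = 1 - Qf z"
  proof -
    have "{..z} = space NN - {z<..}" by auto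
    then show ?thesis unfolding Qf_def using NNp.prob_compl[of "{z<..}"] by simp
  qed
  ultimately show ?thesis unfolding Qf_def by simp
qed

lemma Qf0: "Qf 0 = 1/2" using Qf_sym[of 0] by simp

lemma Qf_chernoff:
  assumes z: "0 \<le> z" shows "Qf z \<le> exp (- z\<^sup>2 / 2) / 2"
proof -
  have "ennreal (Qf z) = (\<integral>\<^sup>+x. indicator {z<..} x * ennreal (std_normal_density x) \<partial>lborel)"
    using emeasure_NN[of "{z<..}"] emeasure_NN_Qf[of z] by simp
  also have "\<dots> = ennreal \<bar>1\<bar> * (\<integral>\<^sup>+x. indicator {z<..} (z + 1 * x) * ennreal (std_normal_density (z + 1 * x)) \<partial>lborel)"
    by (rule nn_integral_real_affine) auto
  also have "\<dots> \<le> (\<integral>\<^sup>+x. ennreal (exp (- z\<^sup>2 / 2)) * (indicator {0<..} x * ennreal (std_normal_density x)) \<partial>lborel)"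
  proof -
    have "indicator {z<..} (z + 1 * x) * ennreal (std_normal_density (z + 1 * x))
        \<le> ennreal (exp (- z\<^sup>2 / 2)) * (indicator {0<..} x * ennreal (std_normal_density x))" for x
    proof (cases "0 < x")
      case True
      have "exp (- (z + x)\<^sup>2 / 2) \<le> exp (- z\<^sup>2 / 2) * exp (- x\<^sup>2 / 2)"
        unfolding exp_add[symmetric] using True z by (simp add: power2_eq_square field_simps)
      then have "std_normal_density (z + x) \<le> exp (- z\<^sup>2 / 2) * std_normal_density x"
        by (simp add: std_normal_density_def divide_right_mono)
      then show ?thesis using True
        by (simp add: ennreal_mult'[symmetric] ennreal_leI)
    qed (simp add: indicator_def)
    then show ?thesis by (simp add: nn_integral_mono)
  qed
  also have "\<dots> = ennreal (exp (- z\<^sup>2 / 2)) * emeasure NN {0<..}"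
    by (subst nn_integral_cmult) (auto simp: emeasure_NN)
  also have "\<dots> = ennreal (exp (- z\<^sup>2 / 2)) * ennreal (1/2)"
    by (simp only: emeasure_NN_Qf Qf0)
  also have "\<dots> = ennreal (exp (- z\<^sup>2 / 2) / 2)"
    by (subst ennreal_mult[symmetric]) auto
  finally show ?thesis by (simp add: ennreal_le_iff)
qed

lemma cont_std: "continuous_on S std_normal_density"
  unfolding std_normal_density_def by (intro continuous_intros) auto

lemma std_le: "std_normal_density x \<le> 1 / sqrt (2*pi)"
  unfolding std_normal_density_def by (simp add: divide_le_cancel)

lemma emeasure_NN_Ioc:
  assumes "a \<le> b" shows "emeasure NN {a<..b} = ennreal (integral {a..b} std_normal_density)"
proof -
  have "emeasure NN {a<..b} = (\<integral>\<^sup>+x. indicator {a<..b} x * ennreal (std_normal_density x) \<partial>lborel)"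
    by (rule emeasure_NN) simp
  also have "\<dots> = (\<integral>\<^sup>+x. ennreal (indicator {a..b} x * std_normal_density x) \<partial>lborel)"
    apply (rule nn_integral_cong_AE)
    using AE_lborel_singleton[of "a"] by eventually_elim (auto simp: indicator_def)
  also have "\<dots> = ennreal (integral {a..b} std_normal_density)"
  proof (rule nn_integral_has_integral_lborel)
    have "(std_normal_density has_integral integral {a..b} std_normal_density) {a..b}"
      by (intro integrable_integral integrable_continuous_interval cont_std)
    then show "((\<lambda>x. indicator {a..b} x * std_normal_density x) has_integral integral {a..b} std_normal_density) UNIV"
    proof -
      have eq: "(\<lambda>x. indicator {a..b} x * std_normal_density x) = (\<lambda>x. if x \<in> {a..b} then std_normal_density x else 0)"
        by (auto simp: indicator_def)
      show ?thesis using \<open>(std_normal_density has_integral _) _\<close> unfolding eq has_integral_restrict_UNIV .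
    qed
  qed auto
  finally show ?thesis .
qed

lemma measure_NN_Ioc:
  assumes "a \<le> b" shows "measure NN {a<..b} = integral {a..b} std_normal_density"
  using emeasure_NN_Ioc[OF assms] unfolding measure_def
  by (simp add: integral_nonneg integrable_continuous_interval cont_std)

lemma int_std_le:
  assumes "a \<le> b" shows "integral {a..b} std_normal_density \<le> (b - a) / sqrt (2*pi)"
proof -
  have "integral {a..b} std_normal_density \<le> integral {a..b} (\<lambda>_. 1 / sqrt (2*pi))"
    by (rule integral_le) (auto intro: integrable_continuous_interval cont_std std_le)
  then show ?thesis using assms by simp
qed

lemma Qf_pos_int:
  assumes "0 \<le> z" shows "Qf z = 1/2 - integral {0..z} std_normal_density"
proof -
  have "{0<..} = {0<..z} \<union> {z<..}" using assms by auto
  moreover have "measure NN ({0<..z} \<union> {z<..}) = measure NN {0<..z} + measure NN {z<..}"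
    by (rule NNp.finite_measure_Union) auto
  ultimately have "Qf 0 = measure NN {0<..z} + Qf z"
    unfolding Qf_def by simp
  then show ?thesis using measure_NN_Ioc[OF assms] Qf0 by simp
qed

lemma Qf_neg_int:
  assumes "z \<le> 0" shows "Qf z = 1/2 + integral {z..0} std_normal_density"
proof -
  have "{z<..} = {z<..0} \<union> {0<..}" using assms by auto
  moreover have "measure NN ({z<..0} \<union> {0<..}) = measure NN {z<..0} + measure NN {0<..}"
    by (rule NNp.finite_measure_Union) auto
  ultimately have "Qf z = measure NN {z<..0} + Qf 0"
    unfolding Qf_def by simp
  then show ?thesis using measure_NN_Ioc[OF assms] Qf0 by simp
qed

definition kk :: real where "kk = sqrt (2*pi) / 2"

lemma kk_pos: "kk > 0" unfolding kk_def by simp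

lemma std_kk: "std_normal_density x = exp (- x\<^sup>2 / 2) / (2 * kk)"
  unfolding std_normal_density_def kk_def by simp

lemma Qf_key: "(z + kk) * Qf z \<le> kk / 2"
proof (cases "0 \<le> z")
  case True
  define P where "P x = integral {0..x} std_normal_density" for x
  define u where "u x = (x + kk) * P x - x / 2" for x
  have dP: "(P has_real_derivative std_normal_density x) (at x within {0..z})" if "x \<in> {0..z}" for x
    unfolding P_def by (rule integral_has_real_derivative[OF cont_std that])
  have du: "(u has_real_derivative (P x + (x + kk) * std_normal_density x - 1/2)) (at x within {0..z})"
    if "x \<in> {0..z}" for x
    unfolding u_def by (rule derivative_eq_intros dP[OF that] refl | simp)+
  have "u 0 \<le> u z"
  proof (rule DERIV_nonneg_imp_increasing_open[OF True])
    show "continuous_on {0..z} u" by (rule DERIV_continuous_on[OF du])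
    fix x assume x: "0 < x" "x < z"
    have d: "DERIV u x :> (P x + (x + kk) * std_normal_density x - 1/2)"
      using du[of x] x by (simp add: at_within_Icc_at)
    have "P x + (x + kk) * std_normal_density x - 1/2 = (x + kk) * std_normal_density x - Qf x"
      using Qf_pos_int[of x] x unfolding P_def by simp
    also have "\<dots> \<ge> (x + kk) * (exp (- x\<^sup>2 / 2) / (2 * kk)) - exp (- x\<^sup>2 / 2) / 2"
      using Qf_chernoff[of x] x by (simp add: std_kk)
    moreover have "(x + kk) * (exp (- x\<^sup>2 / 2) / (2 * kk)) - exp (- x\<^sup>2 / 2) / 2 = x * exp (- x\<^sup>2 / 2) / (2 * kk)"
      using kk_pos by (simp add: field_simps)
    moreover have "x * exp (- x\<^sup>2 / 2) / (2 * kk) \<ge> 0" using x kk_pos by simp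
    ultimately show "\<exists>y. DERIV u x :> y \<and> 0 \<le> y" using d by (intro exI[of _ "P x + (x + kk) * std_normal_density x - 1/2"]) auto
  qed
  then have ineq: "z / 2 \<le> (z + kk) * P z" by (simp add: u_def P_def)
  have "Qf z = 1/2 - P z" using Qf_pos_int[OF True] by (simp add: P_def)
  then have "(z + kk) * Qf z = (z + kk) / 2 - (z + kk) * P z" by (simp only:) (simp add: algebra_simps)
  moreover define A where "A = (z + kk) * P z"
  moreover define B where "B = (z + kk) * Qf z"
  ultimately have "B = (z + kk) / 2 - A" "z / 2 \<le> A" using ineq by auto
  then have "B \<le> kk / 2" by (simp add: add_divide_distrib)
  then show ?thesis by (simp add: B_def)
next
  case False
  then have z: "z < 0" by simp
  have I: "integral {z..0} std_normal_density \<le> (- z) / (2 * kk)"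
    using int_std_le[of z 0] z by (simp add: kk_def)
  have Q: "Qf z = 1/2 + integral {z..0} std_normal_density" using Qf_neg_int z by simp
  show ?thesis
  proof (cases "z + kk \<le> 0")
    case True
    have "(z + kk) * Qf z \<le> 0" using True Qf_nonneg[of z] by (rule mult_nonpos_nonneg)
    then show ?thesis using kk_pos by simp
  next
    case False
    then have "(z + kk) * Qf z \<le> (z + kk) * (1/2 + (- z) / (2 * kk))"
      using I Q by (intro mult_left_mono) auto
    also have "\<dots> = (kk\<^sup>2 - z\<^sup>2) / (2 * kk)" using kk_pos by (simp add: field_simps power2_eq_square)
    also have "\<dots> \<le> kk / 2" using kk_pos by (simp add: field_simps power2_eq_square)
    finally show ?thesis .
  qed
qed


lemma bvn_pdf_meas[measurable]: "bvn_pdf a b c \<in> borel_measurable borel"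
proof -
  have "(\<lambda>p. exp (- ((fst p)\<^sup>2 / a\<^sup>2 - 2 * c * fst p * snd p / (a * b) + (snd p)\<^sup>2 / b\<^sup>2) / (2 * (1 - c\<^sup>2)))
       / (2 * pi * a * b * sqrt (1 - c\<^sup>2))) \<in> borel_measurable (borel \<Otimes>\<^sub>M borel)"
    by measurable
  then show ?thesis unfolding borel_prod by (simp add: bvn_pdf_def[abs_def] Let_def)
qed

lemma p2: "(\<sigma>::real) > 0 \<Longrightarrow> 2 * r * (\<sigma> * X) * (r * (\<sigma> * X) + \<sigma> * s * Y) / (\<sigma> * \<sigma>) = 2 * r * X * (r * X + s * Y)"
proof -
  assume "\<sigma> > 0"
  have eq: "2 * r * (\<sigma> * X) * (r * (\<sigma> * X) + \<sigma> * s * Y) = (\<sigma> * \<sigma>) * (2 * r * X * (r * X + s * Y))" by algebra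
  show ?thesis by (subst eq) (use \<open>\<sigma> > 0\<close> in simp)
qed
lemma p3: "(\<sigma>::real) > 0 \<Longrightarrow> (r * (\<sigma> * X) + \<sigma> * s * Y)\<^sup>2 / \<sigma>\<^sup>2 = (r * X + s * Y)\<^sup>2"
proof -
  assume "\<sigma> > 0"
  have eq: "(r * (\<sigma> * X) + \<sigma> * s * Y)\<^sup>2 = \<sigma>\<^sup>2 * (r * X + s * Y)\<^sup>2" by algebra
  show ?thesis by (subst eq) (use \<open>\<sigma> > 0\<close> in simp)
qed
lemma p4: "(r::real)\<^sup>2 < 1 \<Longrightarrow> - ((1 - r\<^sup>2) * (X\<^sup>2 + Y\<^sup>2)) / (2 * (1 - r\<^sup>2)) = - X\<^sup>2 / 2 + - Y\<^sup>2 / 2"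
proof -
  assume "r\<^sup>2 < 1" then have "1 - r\<^sup>2 \<noteq> 0" by simp
  then show ?thesis by (simp add: divide_simps) (simp add: algebra_simps)
qed

lemma pdf_sub:
  assumes s: "\<sigma> > 0" and r: "r\<^sup>2 < 1"
  shows "\<sigma> * (\<sigma> * sqrt (1 - r\<^sup>2)) * bvn_pdf \<sigma> \<sigma> r (\<sigma> * X, r * (\<sigma> * X) + \<sigma> * sqrt (1 - r\<^sup>2) * Y)
    = std_normal_density X * std_normal_density Y"
proof -
  define s where "s = sqrt (1 - r\<^sup>2)"
  have s0: "s > 0" using r by (simp add: s_def)
  have ss: "s\<^sup>2 = 1 - r\<^sup>2" using r by (simp add: s_def)
  have 1: "(\<sigma> * X)\<^sup>2 / \<sigma>\<^sup>2 = X\<^sup>2" using s by (simp add: power_mult_distrib)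
  have 4: "X\<^sup>2 - 2 * r * X * (r * X + s * Y) + (r * X + s * Y)\<^sup>2 = (1 - r\<^sup>2) * (X\<^sup>2 + Y\<^sup>2)"
    using ss by algebra
  have e: "- ((\<sigma> * X)\<^sup>2 / \<sigma>\<^sup>2 - 2 * r * (\<sigma> * X) * (r * (\<sigma> * X) + \<sigma> * s * Y) / (\<sigma> * \<sigma>)
           + (r * (\<sigma> * X) + \<sigma> * s * Y)\<^sup>2 / \<sigma>\<^sup>2) / (2 * (1 - r\<^sup>2))
         = - X\<^sup>2 / 2 + - Y\<^sup>2 / 2"
    unfolding 1 p2[OF s] p3[OF s] 4 p4[OF r] ..
  have "bvn_pdf \<sigma> \<sigma> r (\<sigma> * X, r * (\<sigma> * X) + \<sigma> * s * Y) = exp (- X\<^sup>2 / 2 + - Y\<^sup>2 / 2) / (2 * pi * \<sigma> * \<sigma> * s)"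
    unfolding bvn_pdf_def Let_def fst_conv snd_conv e s_def[symmetric] ..
  also have "\<dots> = exp (- X\<^sup>2 / 2) * exp (- Y\<^sup>2 / 2) / (2 * pi * \<sigma> * \<sigma> * s)"
    by (simp only: exp_add)
  finally have "bvn_pdf \<sigma> \<sigma> r (\<sigma> * X, r * (\<sigma> * X) + \<sigma> * s * Y) = exp (- X\<^sup>2 / 2) * exp (- Y\<^sup>2 / 2) / (2 * pi * \<sigma> * \<sigma> * s)" .
  then have "\<sigma> * (\<sigma> * s) * bvn_pdf \<sigma> \<sigma> r (\<sigma> * X, r * (\<sigma> * X) + \<sigma> * s * Y) = exp (- X\<^sup>2 / 2) * exp (- Y\<^sup>2 / 2) / (2 * pi)"
    using s s0 by simp
  moreover have "std_normal_density X * std_normal_density Y = exp (- X\<^sup>2 / 2) * exp (- Y\<^sup>2 / 2) / (2 * pi)"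
    unfolding std_normal_density_def by (simp add: real_sqrt_mult[symmetric])
  ultimately show ?thesis unfolding s_def by simp
qed


lemma lborel_pair_iter:
  assumes [measurable]: "g \<in> borel_measurable borel"
  shows "(\<integral>\<^sup>+p. g p \<partial>(lborel :: (real \<times> real) measure)) = (\<integral>\<^sup>+x. \<integral>\<^sup>+y. g (x, y) \<partial>lborel \<partial>lborel)"
proof -
  have "g \<in> borel_measurable (lborel \<Otimes>\<^sub>M lborel)" unfolding lborel_prod by simp
  then have "(\<integral>\<^sup>+x. \<integral>\<^sup>+y. g (x, y) \<partial>lborel \<partial>lborel) = integral\<^sup>N (lborel \<Otimes>\<^sub>M lborel) g"
    by (rule lborel.nn_integral_fst)
  then show ?thesis unfolding lborel_prod by simp
qed

lemma bvn_change:
  fixes \<sigma> r :: real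
  assumes s: "\<sigma> > 0" and r: "r\<^sup>2 < 1"
  assumes f[measurable]: "f \<in> borel_measurable borel"
  shows "(\<integral>\<^sup>+p. f p * ennreal (bvn_pdf \<sigma> \<sigma> r p) \<partial>lborel) =
    (\<integral>\<^sup>+X. \<integral>\<^sup>+Y. f (\<sigma> * X, r * (\<sigma> * X) + \<sigma> * sqrt (1 - r\<^sup>2) * Y) * ennreal (std_normal_density X * std_normal_density Y) \<partial>lborel \<partial>lborel)"
proof -
  define s where "s = sqrt (1 - r\<^sup>2)"
  have s0: "s > 0" using r by (simp add: s_def)
  have "(\<integral>\<^sup>+p. f p * ennreal (bvn_pdf \<sigma> \<sigma> r p) \<partial>lborel) =
    (\<integral>\<^sup>+x. \<integral>\<^sup>+y. f (x, y) * ennreal (bvn_pdf \<sigma> \<sigma> r (x, y)) \<partial>lborel \<partial>lborel)"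
    by (rule lborel_pair_iter) simp
  also have "\<dots> = (\<integral>\<^sup>+x. ennreal \<bar>\<sigma> * s\<bar> * \<integral>\<^sup>+Y. f (x, r * x + (\<sigma> * s) * Y) * ennreal (bvn_pdf \<sigma> \<sigma> r (x, r * x + (\<sigma> * s) * Y)) \<partial>lborel \<partial>lborel)"
    by (rule nn_integral_cong, rule nn_integral_real_affine) (use s s0 in auto)
  also have "\<dots> = ennreal \<bar>\<sigma>\<bar> * (\<integral>\<^sup>+X. ennreal \<bar>\<sigma> * s\<bar> * \<integral>\<^sup>+Y. f (0 + \<sigma> * X, r * (0 + \<sigma> * X) + (\<sigma> * s) * Y) * ennreal (bvn_pdf \<sigma> \<sigma> r (0 + \<sigma> * X, r * (0 + \<sigma> * X) + (\<sigma> * s) * Y)) \<partial>lborel \<partial>lborel)"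
    by (rule nn_integral_real_affine) (use s s0 in auto)
  also have "\<dots> = (\<integral>\<^sup>+X. \<integral>\<^sup>+Y. f (\<sigma> * X, r * (\<sigma> * X) + \<sigma> * s * Y) * ennreal (\<sigma> * (\<sigma> * s) * bvn_pdf \<sigma> \<sigma> r (\<sigma> * X, r * (\<sigma> * X) + \<sigma> * s * Y)) \<partial>lborel \<partial>lborel)"
    using s s0
    by (simp add: nn_integral_cmult[symmetric] ennreal_mult' mult.assoc mult.left_commute abs_of_pos)
  also have "\<dots> = (\<integral>\<^sup>+X. \<integral>\<^sup>+Y. f (\<sigma> * X, r * (\<sigma> * X) + \<sigma> * s * Y) * ennreal (std_normal_density X * std_normal_density Y) \<partial>lborel \<partial>lborel)"
    using pdf_sub[OF s r] unfolding s_def by simp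
  finally show ?thesis unfolding s_def .
qed



lemma nd_scale: "c \<noteq> 0 \<Longrightarrow> \<bar>c\<bar> * normal_density 0 \<bar>c\<bar> (c * X) = std_normal_density X"
proof -
  assume c: "c \<noteq> 0"
  have 1: "sqrt (2 * pi * \<bar>c\<bar>\<^sup>2) = sqrt (2 * pi) * \<bar>c\<bar>" by (simp add: real_sqrt_mult)
  have 2: "(c * X - 0)\<^sup>2 / (2 * \<bar>c\<bar>\<^sup>2) = X\<^sup>2 / 2" using c by (simp add: field_simps power_mult_distrib)
  show ?thesis unfolding normal_density_def 1 2 using c by (simp add: power_mult_distrib)
qed

lemma B0:
  assumes c: "c \<noteq> 0" and [measurable]: "G \<in> borel_measurable borel"
  shows "(\<integral>\<^sup>+X. G (c * X) * ennreal (std_normal_density X) \<partial>lborel) = (\<integral>\<^sup>+u. G u * ennreal (normal_density 0 \<bar>c\<bar> u) \<partial>lborel)"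
proof -
  have "(\<integral>\<^sup>+u. G u * ennreal (normal_density 0 \<bar>c\<bar> u) \<partial>lborel) =
     ennreal \<bar>c\<bar> * (\<integral>\<^sup>+X. G (0 + c * X) * ennreal (normal_density 0 \<bar>c\<bar> (0 + c * X)) \<partial>lborel)"
    by (rule nn_integral_real_affine) (use c in auto)
  also have "\<dots> = (\<integral>\<^sup>+X. G (c * X) * ennreal (\<bar>c\<bar> * normal_density 0 \<bar>c\<bar> (c * X)) \<partial>lborel)"
    by (simp add: nn_integral_cmult[symmetric] ennreal_mult' mult.left_commute)
  also have "\<dots> = (\<integral>\<^sup>+X. G (c * X) * ennreal (std_normal_density X) \<partial>lborel)"
    using nd_scale[OF c] by simp
  finally show ?thesis ..
qed

lemma int_std1: "(\<integral>\<^sup>+Y. ennreal (std_normal_density Y) \<partial>lborel) = 1"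
  by (subst nn_integral_eq_integral) auto

lemma B_single:
  assumes c: "c \<noteq> 0" and [measurable]: "g \<in> borel_measurable borel"
  shows "(\<integral>\<^sup>+X. \<integral>\<^sup>+Y. g (c * X) * ennreal (std_normal_density X * std_normal_density Y) \<partial>lborel \<partial>lborel)
     = (\<integral>\<^sup>+u. g u * ennreal (normal_density 0 \<bar>c\<bar> u) \<partial>lborel)"
proof -
  have "(\<integral>\<^sup>+Y. g (c * X) * ennreal (std_normal_density X * std_normal_density Y) \<partial>lborel)
      = g (c * X) * ennreal (std_normal_density X)" for X
  proof -
    have "(\<integral>\<^sup>+Y. g (c * X) * ennreal (std_normal_density X * std_normal_density Y) \<partial>lborel)
      = (\<integral>\<^sup>+Y. (g (c * X) * ennreal (std_normal_density X)) * ennreal (std_normal_density Y) \<partial>lborel)"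
      by (simp add: ennreal_mult' mult.assoc)
    also have "\<dots> = g (c * X) * ennreal (std_normal_density X) * (\<integral>\<^sup>+Y. ennreal (std_normal_density Y) \<partial>lborel)"
      by (rule nn_integral_cmult) simp
    finally show ?thesis by (simp add: int_std1)
  qed
  then have "(\<integral>\<^sup>+X. \<integral>\<^sup>+Y. g (c * X) * ennreal (std_normal_density X * std_normal_density Y) \<partial>lborel \<partial>lborel)
     = (\<integral>\<^sup>+X. g (c * X) * ennreal (std_normal_density X) \<partial>lborel)" by simp
  also have "\<dots> = (\<integral>\<^sup>+u. g u * ennreal (normal_density 0 \<bar>c\<bar> u) \<partial>lborel)"
    by (rule B0[OF c]) simp
  finally show ?thesis .
qed

lemma B_main:
  assumes a: "a \<noteq> 0" and b: "b \<noteq> 0" and [measurable]: "g \<in> borel_measurable borel"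
  shows "(\<integral>\<^sup>+X. \<integral>\<^sup>+Y. g (a * X + b * Y) * ennreal (std_normal_density X * std_normal_density Y) \<partial>lborel \<partial>lborel)
     = (\<integral>\<^sup>+z. g z * ennreal (normal_density 0 (sqrt (a\<^sup>2 + b\<^sup>2)) z) \<partial>lborel)"
proof -
  have "(\<integral>\<^sup>+X. \<integral>\<^sup>+Y. g (a * X + b * Y) * ennreal (std_normal_density X * std_normal_density Y) \<partial>lborel \<partial>lborel)
    = (\<integral>\<^sup>+Y. \<integral>\<^sup>+X. g (a * X + b * Y) * ennreal (std_normal_density X * std_normal_density Y) \<partial>lborel \<partial>lborel)"
    by (rule lborel_pair.Fubini'[symmetric]) measurable
  also have "\<dots> = (\<integral>\<^sup>+Y. \<integral>\<^sup>+z. g z * ennreal (normal_density 0 \<bar>a\<bar> (z - b * Y) * std_normal_density Y) \<partial>lborel \<partial>lborel)"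
  proof (rule nn_integral_cong)
    fix Y
    have "(\<integral>\<^sup>+X. g (a * X + b * Y) * ennreal (std_normal_density X * std_normal_density Y) \<partial>lborel)
       = (\<integral>\<^sup>+X. ennreal (std_normal_density Y) * (g (b * Y + a * X) * ennreal (std_normal_density X)) \<partial>lborel)"
      by (simp add: ennreal_mult' algebra_simps)
    also have "\<dots> = ennreal (std_normal_density Y) * (\<integral>\<^sup>+X. g (b * Y + a * X) * ennreal (std_normal_density X) \<partial>lborel)"
      by (rule nn_integral_cmult) simp
    also have "(\<integral>\<^sup>+X. g (b * Y + a * X) * ennreal (std_normal_density X) \<partial>lborel)
       = (\<integral>\<^sup>+u. g (b * Y + u) * ennreal (normal_density 0 \<bar>a\<bar> u) \<partial>lborel)"
      by (rule B0[OF a, where G="\<lambda>u. g (b * Y + u)"]) simp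
    also have "\<dots> = ennreal \<bar>1\<bar> * (\<integral>\<^sup>+z. g (b * Y + (- (b * Y) + 1 * z)) * ennreal (normal_density 0 \<bar>a\<bar> (- (b * Y) + 1 * z)) \<partial>lborel)"
      by (rule nn_integral_real_affine) auto
    also have "ennreal (std_normal_density Y) * \<dots> = (\<integral>\<^sup>+z. g z * ennreal (normal_density 0 \<bar>a\<bar> (z - b * Y) * std_normal_density Y) \<partial>lborel)"
      by (simp add: nn_integral_cmult[symmetric] ennreal_mult' algebra_simps)
    finally show "(\<integral>\<^sup>+X. g (a * X + b * Y) * ennreal (std_normal_density X * std_normal_density Y) \<partial>lborel)
      = (\<integral>\<^sup>+z. g z * ennreal (normal_density 0 \<bar>a\<bar> (z - b * Y) * std_normal_density Y) \<partial>lborel)" .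
  qed
  also have "\<dots> = (\<integral>\<^sup>+z. \<integral>\<^sup>+Y. g z * ennreal (normal_density 0 \<bar>a\<bar> (z - b * Y) * std_normal_density Y) \<partial>lborel \<partial>lborel)"
    by (rule lborel_pair.Fubini') measurable
  also have "\<dots> = (\<integral>\<^sup>+z. g z * ennreal (normal_density 0 (sqrt (a\<^sup>2 + b\<^sup>2)) z) \<partial>lborel)"
  proof (rule nn_integral_cong)
    fix z
    have "(\<integral>\<^sup>+Y. g z * ennreal (normal_density 0 \<bar>a\<bar> (z - b * Y) * std_normal_density Y) \<partial>lborel)
      = g z * (\<integral>\<^sup>+Y. ennreal (normal_density 0 \<bar>a\<bar> (z - b * Y)) * ennreal (std_normal_density Y) \<partial>lborel)"
      by (subst nn_integral_cmult[symmetric]) (auto simp: ennreal_mult')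
    also have "(\<integral>\<^sup>+Y. ennreal (normal_density 0 \<bar>a\<bar> (z - b * Y)) * ennreal (std_normal_density Y) \<partial>lborel)
      = (\<integral>\<^sup>+w. ennreal (normal_density 0 \<bar>a\<bar> (z - w)) * ennreal (normal_density 0 \<bar>b\<bar> w) \<partial>lborel)"
      by (rule B0[OF b, where G="\<lambda>w. ennreal (normal_density 0 \<bar>a\<bar> (z - w))"]) simp
    also have "\<dots> = (\<integral>\<^sup>+w. ennreal (normal_density 0 \<bar>a\<bar> (z - w) * normal_density 0 \<bar>b\<bar> w) \<partial>lborel)"
      by (simp add: ennreal_mult')
    also have "\<dots> = ennreal (normal_density 0 (sqrt (\<bar>a\<bar>\<^sup>2 + \<bar>b\<bar>\<^sup>2)) z)"
      using fun_cong[OF conv_normal_density_zero_mean[of "\<bar>a\<bar>" "\<bar>b\<bar>"], of z] a b by simp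
    finally show "(\<integral>\<^sup>+Y. g z * ennreal (normal_density 0 \<bar>a\<bar> (z - b * Y) * std_normal_density Y) \<partial>lborel)
      = g z * ennreal (normal_density 0 (sqrt (a\<^sup>2 + b\<^sup>2)) z)" by simp
  qed
  finally show ?thesis .
qed



lemma B_gen:
  assumes ab: "a \<noteq> 0 \<or> b \<noteq> 0" and [measurable]: "g \<in> borel_measurable borel"
  shows "(\<integral>\<^sup>+X. \<integral>\<^sup>+Y. g (a * X + b * Y) * ennreal (std_normal_density X * std_normal_density Y) \<partial>lborel \<partial>lborel)
     = (\<integral>\<^sup>+z. g z * ennreal (normal_density 0 (sqrt (a\<^sup>2 + b\<^sup>2)) z) \<partial>lborel)"
proof (cases "a \<noteq> 0 \<and> b \<noteq> 0")
  case True
  then show ?thesis using B_main by auto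
next
  case False
  show ?thesis
  proof (cases "b = 0")
    case True
    then have a: "a \<noteq> 0" using ab by simp
    show ?thesis using B_single[OF a, of g] True by simp
  next
    case False
    then have a: "a = 0" and b: "b \<noteq> 0" using \<open>\<not> (a \<noteq> 0 \<and> b \<noteq> 0)\<close> by auto
    have "(\<integral>\<^sup>+X. \<integral>\<^sup>+Y. g (a * X + b * Y) * ennreal (std_normal_density X * std_normal_density Y) \<partial>lborel \<partial>lborel)
      = (\<integral>\<^sup>+X. \<integral>\<^sup>+Y. g (b * Y) * ennreal (std_normal_density Y * std_normal_density X) \<partial>lborel \<partial>lborel)"
      using a by (simp add: mult.commute)
    also have "\<dots> = (\<integral>\<^sup>+Y. \<integral>\<^sup>+X. g (b * Y) * ennreal (std_normal_density Y * std_normal_density X) \<partial>lborel \<partial>lborel)"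
      by (rule lborel_pair.Fubini'[symmetric]) measurable
    also have "\<dots> = (\<integral>\<^sup>+z. g z * ennreal (normal_density 0 \<bar>b\<bar> z) \<partial>lborel)"
      by (rule B_single[OF b]) simp
    finally show ?thesis using a by simp
  qed
qed

lemma quad_pos:
  fixes r \<alpha> \<beta> :: real
  assumes r: "r\<^sup>2 < 1" and ab: "\<alpha> \<noteq> 0 \<or> \<beta> \<noteq> 0"
  shows "\<alpha>\<^sup>2 + 2 * r * \<alpha> * \<beta> + \<beta>\<^sup>2 > 0"
proof -
  have eq: "\<alpha>\<^sup>2 + 2 * r * \<alpha> * \<beta> + \<beta>\<^sup>2 = (\<alpha> + r * \<beta>)\<^sup>2 + (1 - r\<^sup>2) * \<beta>\<^sup>2" by algebra
  show ?thesis
  proof (cases "\<beta> = 0")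
    case True then show ?thesis using ab by simp
  next
    case False
    then have "(1 - r\<^sup>2) * \<beta>\<^sup>2 > 0" using r by simp
    then show ?thesis unfolding eq by (smt (verit) zero_le_power2)
  qed
qed

lemma HP:
  fixes \<sigma> r \<alpha> \<beta> d :: real
  assumes s: "\<sigma> > 0" and r: "r\<^sup>2 < 1" and ab: "\<alpha> \<noteq> 0 \<or> \<beta> \<noteq> 0"
  shows "measure (bvn \<sigma> \<sigma> r) {p. d < \<alpha> * fst p + \<beta> * snd p} = Qf (d / (\<sigma> * sqrt (\<alpha>\<^sup>2 + 2 * r * \<alpha> * \<beta> + \<beta>\<^sup>2)))"
proof -
  define H where "H = {p :: real \<times> real. d < \<alpha> * fst p + \<beta> * snd p}"
  define sr where "sr = sqrt (1 - r\<^sup>2)"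
  define a where "a = \<sigma> * (\<alpha> + \<beta> * r)"
  define b where "b = \<sigma> * \<beta> * sr"
  define \<tau> where "\<tau> = \<sigma> * sqrt (\<alpha>\<^sup>2 + 2 * r * \<alpha> * \<beta> + \<beta>\<^sup>2)"
  have sr0: "sr > 0" using r by (simp add: sr_def)
  have srsq: "sr\<^sup>2 = 1 - r\<^sup>2" using r by (simp add: sr_def)
  have qp: "\<alpha>\<^sup>2 + 2 * r * \<alpha> * \<beta> + \<beta>\<^sup>2 > 0" by (rule quad_pos[OF r ab])
  have tau0: "\<tau> > 0" using s qp by (simp add: \<tau>_def)
  have f: "(\<lambda>p::real\<times>real. \<alpha> * fst p + \<beta> * snd p) \<in> borel_measurable borel"
    by (intro borel_measurable_continuous_onI continuous_intros)
  have "(\<lambda>p::real\<times>real. \<alpha> * fst p + \<beta> * snd p) -` {d<..} \<inter> space borel \<in> sets borel"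
    by (rule measurable_sets[OF f]) simp
  then have Hm[measurable]: "H \<in> sets borel" unfolding H_def by (simp add: vimage_def)
  have abnz: "a \<noteq> 0 \<or> b \<noteq> 0"
  proof (cases "\<beta> = 0")
    case True then show ?thesis using ab s by (simp add: a_def)
  next
    case False then show ?thesis using s sr0 by (simp add: b_def)
  qed
  have absq: "a\<^sup>2 + b\<^sup>2 = \<sigma>\<^sup>2 * (\<alpha>\<^sup>2 + 2 * r * \<alpha> * \<beta> + \<beta>\<^sup>2)"
    unfolding a_def b_def using srsq by algebra
  have tau_eq: "sqrt (a\<^sup>2 + b\<^sup>2) = \<tau>"
    unfolding absq \<tau>_def using s by (simp add: real_sqrt_mult)
  have "emeasure (bvn \<sigma> \<sigma> r) H = (\<integral>\<^sup>+p. indicator H p * ennreal (bvn_pdf \<sigma> \<sigma> r p) \<partial>lborel)"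
    unfolding bvn_def by (subst emeasure_density) (auto simp: mult.commute)
  also have "\<dots> = (\<integral>\<^sup>+X. \<integral>\<^sup>+Y. indicator H (\<sigma> * X, r * (\<sigma> * X) + \<sigma> * sqrt (1 - r\<^sup>2) * Y) * ennreal (std_normal_density X * std_normal_density Y) \<partial>lborel \<partial>lborel)"
    by (rule bvn_change[OF s r]) simp
  also have "\<dots> = (\<integral>\<^sup>+X. \<integral>\<^sup>+Y. indicator {d<..} (a * X + b * Y) * ennreal (std_normal_density X * std_normal_density Y) \<partial>lborel \<partial>lborel)"
  proof -
    have "\<alpha> * (\<sigma> * X) + \<beta> * (r * (\<sigma> * X) + \<sigma> * sr * Y) = a * X + b * Y" for X Y
      unfolding a_def b_def by algebra
    then show ?thesis unfolding H_def sr_def[symmetric] by (simp add: indicator_def)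
  qed
  also have "\<dots> = (\<integral>\<^sup>+z. indicator {d<..} z * ennreal (normal_density 0 \<tau> z) \<partial>lborel)"
    using B_gen[OF abnz, of "indicator {d<..}"] tau_eq by simp
  also have "\<dots> = (\<integral>\<^sup>+X. indicator {d<..} (\<tau> * X) * ennreal (std_normal_density X) \<partial>lborel)"
    using B0[of \<tau> "indicator {d<..}"] tau0 by simp
  also have "\<dots> = (\<integral>\<^sup>+X. indicator {d / \<tau><..} X * ennreal (std_normal_density X) \<partial>lborel)"
    using tau0 by (intro nn_integral_cong) (simp add: indicator_def divide_less_eq mult.commute)
  also have "\<dots> = emeasure NN {d / \<tau><..}"
    by (rule emeasure_NN[symmetric]) simp
  also have "\<dots> = ennreal (Qf (d / \<tau>))" by (rule emeasure_NN_Qf)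
  finally have "emeasure (bvn \<sigma> \<sigma> r) H = ennreal (Qf (d / \<tau>))" .
  then show ?thesis unfolding H_def[symmetric] \<tau>_def[symmetric] measure_def
    using Qf_nonneg by simp
qed

lemma cell2_eq:
  "cellC2 a b = {p. (fst b)\<^sup>2 + (snd b)\<^sup>2 - (fst a)\<^sup>2 - (snd a)\<^sup>2
      < (2 * (fst b - fst a)) * fst p + (2 * (snd b - snd a)) * snd p}" (is "_ = ?R")
proof -
  have "(fst a - x)\<^sup>2 + (snd a - y)\<^sup>2 - ((fst b - x)\<^sup>2 + (snd b - y)\<^sup>2)
     = (2 * (fst b - fst a)) * x + (2 * (snd b - snd a)) * y - ((fst b)\<^sup>2 + (snd b)\<^sup>2 - (fst a)\<^sup>2 - (snd a)\<^sup>2)" for x y :: real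
    by algebra
  note id = this
  show ?thesis
  proof (rule set_eqI)
    fix p :: "real \<times> real"
    obtain x y where p: "p = (x, y)" by (cases p)
    have "p \<in> cellC2 a b \<longleftrightarrow> (fst a - x)\<^sup>2 + (snd a - y)\<^sup>2 > (fst b - x)\<^sup>2 + (snd b - y)\<^sup>2"
      unfolding cellC2_def p by simp
    then show "p \<in> cellC2 a b \<longleftrightarrow> p \<in> ?R"
      using id[of x y] unfolding p mem_Collect_eq fst_conv snd_conv by (smt (verit))
  qed
qed

lemma cell1_eq:
  "cellC1 a b = {p. - ((fst b)\<^sup>2 + (snd b)\<^sup>2 - (fst a)\<^sup>2 - (snd a)\<^sup>2)
      < (- (2 * (fst b - fst a))) * fst p + (- (2 * (snd b - snd a))) * snd p}" (is "_ = ?R")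
proof -
  have "(fst a - x)\<^sup>2 + (snd a - y)\<^sup>2 - ((fst b - x)\<^sup>2 + (snd b - y)\<^sup>2)
     = (2 * (fst b - fst a)) * x + (2 * (snd b - snd a)) * y - ((fst b)\<^sup>2 + (snd b)\<^sup>2 - (fst a)\<^sup>2 - (snd a)\<^sup>2)" for x y :: real
    by algebra
  note id = this
  show ?thesis
  proof (rule set_eqI)
    fix p :: "real \<times> real"
    obtain x y where p: "p = (x, y)" by (cases p)
    have "p \<in> cellC1 a b \<longleftrightarrow> (fst a - x)\<^sup>2 + (snd a - y)\<^sup>2 < (fst b - x)\<^sup>2 + (snd b - y)\<^sup>2"
      unfolding cellC1_def p by simp
    then show "p \<in> cellC1 a b \<longleftrightarrow> p \<in> ?R"
      using id[of x y] minus_mult_left[of "2 * (fst b - fst a)" x] minus_mult_left[of "2 * (snd b - snd a)" y] unfolding p mem_Collect_eq fst_conv snd_conv by (smt (verit))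
  qed
qed



lemma KEY:
  fixes \<sigma> r \<alpha> \<beta> c :: real
  assumes s: "\<sigma> > 0" and r0: "0 < r" and r1: "r < 1" and ab: "\<alpha> \<noteq> 0 \<or> \<beta> \<noteq> 0"
    and c_def: "c = kk * (\<sigma> * sqrt (2 * (1 + r))) / 2"
  shows "(\<alpha> + \<beta>) * Qf (((\<alpha>\<^sup>2 + \<beta>\<^sup>2) / 4 - c * (\<alpha> + \<beta>)) / (\<sigma> * sqrt (\<alpha>\<^sup>2 + 2 * r * \<alpha> * \<beta> + \<beta>\<^sup>2))) \<le> 4 * c"
proof -
  define S where "S = \<alpha> + \<beta>"
  define N2 where "N2 = \<alpha>\<^sup>2 + \<beta>\<^sup>2"
  define \<tau> where "\<tau> = \<sigma> * sqrt (\<alpha>\<^sup>2 + 2 * r * \<alpha> * \<beta> + \<beta>\<^sup>2)"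
  define z where "z = (N2 / 4 - c * S) / \<tau>"
  define Q where "Q = Qf z"
  define W where "W = \<sigma> * sqrt (2 * (1 + r))"
  define n where "n = sqrt (2 * N2)"
  have "r * r < 1 * 1" by (rule mult_strict_mono) (use r0 r1 in auto)
  then have r2: "r\<^sup>2 < 1" by (simp add: power2_eq_square)
  have qp: "\<alpha>\<^sup>2 + 2 * r * \<alpha> * \<beta> + \<beta>\<^sup>2 > 0" by (rule quad_pos[OF r2 ab])
  have tau0: "\<tau> > 0" using s qp by (simp add: \<tau>_def)
  have tausq: "\<tau>\<^sup>2 = \<sigma>\<^sup>2 * (\<alpha>\<^sup>2 + 2 * r * \<alpha> * \<beta> + \<beta>\<^sup>2)"
    using qp by (simp add: \<tau>_def power_mult_distrib)
  have W0: "W > 0" using s r0 by (simp add: W_def)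
  have Wsq: "W\<^sup>2 = 2 * \<sigma>\<^sup>2 * (1 + r)" using r0 by (simp add: W_def power_mult_distrib)
  have N2pos: "N2 > 0" using ab by (auto simp: N2_def add_pos_nonneg add_nonneg_pos)
  have n0: "n \<ge> 0" using N2pos by (simp add: n_def)
  have nsq: "n\<^sup>2 = 2 * N2" using N2pos by (simp add: n_def less_imp_le)
  have cW: "c = kk * W / 2" by (simp add: c_def W_def)
  have c0: "c > 0" unfolding cW using kk_pos W0 by simp
  have Q0: "Q \<ge> 0" by (simp add: Q_def Qf_nonneg)
  have keyQ: "(z + kk) * Q \<le> kk / 2" unfolding Q_def by (rule Qf_key)
  have tz: "\<tau> * z = N2 / 4 - c * S" using tau0 by (simp add: z_def)
  have S2: "S\<^sup>2 \<le> 2 * N2"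
  proof -
    have "2 * N2 - S\<^sup>2 = (\<alpha> - \<beta>)\<^sup>2" unfolding N2_def S_def by algebra
    then show ?thesis by (smt (verit) zero_le_power2)
  qed
  have Sn: "S \<le> n"
  proof (cases "S \<le> 0")
    case True then show ?thesis using n0 by simp
  next
    case False
    then show ?thesis using S2 nsq n0 by (auto intro: power2_le_imp_le)
  qed
  have goal: "S * Q \<le> 4 * c"
  proof (cases "S \<le> 0")
    case True
    then have "S * Q \<le> 0" using Q0 by (simp add: mult_nonpos_nonneg)
    then show ?thesis using c0 by simp
  next
    case False
    then have S0: "S > 0" by simp
    define L where "L = S * (\<tau> * z) * Q + c * S\<^sup>2 * Q"
    have L_eq: "L = S * Q * (N2 / 4)" unfolding L_def tz by (simp add: algebra_simps power2_eq_square)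
    have L_le: "L \<le> c * N2"
    proof (cases "z \<ge> 0")
      case True
      have tau_le: "\<tau> \<le> W * n / 2"
      proof (rule power2_le_imp_le)
        have "2 * \<alpha> * \<beta> \<le> N2" unfolding N2_def by (smt (verit) sum_squares_bound)
        then have "r * (2 * \<alpha> * \<beta>) \<le> r * N2" using r0 by (intro mult_left_mono) auto
        then have "\<alpha>\<^sup>2 + 2 * r * \<alpha> * \<beta> + \<beta>\<^sup>2 \<le> (1 + r) * N2" unfolding N2_def by (simp add: algebra_simps)
        then have "\<tau>\<^sup>2 \<le> \<sigma>\<^sup>2 * ((1 + r) * N2)" unfolding tausq using s by (intro mult_left_mono) auto
        also have "\<dots> = (W * n / 2)\<^sup>2" by (simp add: power_mult_distrib power_divide Wsq nsq)
        finally show "\<tau>\<^sup>2 \<le> (W * n / 2)\<^sup>2" .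
        show "0 \<le> W * n / 2" using W0 n0 by simp
      qed
      have "S * (\<tau> * z) * Q \<le> S * (W * n / 2 * z) * Q"
        using tau_le S0 True Q0 by (intro mult_right_mono mult_left_mono) auto
      moreover have "c * S\<^sup>2 * Q \<le> c * S * n * Q"
        using Sn S0 c0 Q0 by (simp add: power2_eq_square mult.assoc mult_left_mono mult_right_mono)
      ultimately have "L \<le> S * n * (W / 2) * ((z + kk) * Q)"
        unfolding L_def cW by (simp add: algebra_simps)
      also have "\<dots> \<le> S * n * (W / 2) * (kk / 2)"
        using keyQ S0 n0 W0 by (intro mult_left_mono) auto
      also have "\<dots> = S * n * c / 2" by (simp add: cW)
      also have "\<dots> \<le> n * n * c / 2" using Sn n0 c0 by (intro divide_right_mono mult_right_mono) auto
      also have "\<dots> = c * N2" using nsq by (simp add: power2_eq_square)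
      finally show ?thesis .
    next
      case False
      have tau_ge: "S * W / 2 \<le> \<tau>"
      proof (rule power2_le_imp_le)
        have "(1 - r) * (2 * \<alpha> * \<beta>) \<le> (1 - r) * N2" unfolding N2_def using r1
          by (intro mult_left_mono) (smt (verit) sum_squares_bound, simp)
        then have "S\<^sup>2 * (1 + r) \<le> 2 * (\<alpha>\<^sup>2 + 2 * r * \<alpha> * \<beta> + \<beta>\<^sup>2)"
          unfolding S_def N2_def by (simp add: algebra_simps power2_eq_square)
        then have "\<sigma>\<^sup>2 * (S\<^sup>2 * (1 + r)) \<le> \<sigma>\<^sup>2 * (2 * (\<alpha>\<^sup>2 + 2 * r * \<alpha> * \<beta> + \<beta>\<^sup>2))"
          by (intro mult_left_mono) auto
        then show "(S * W / 2)\<^sup>2 \<le> \<tau>\<^sup>2"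
          by (simp add: power_mult_distrib power_divide Wsq tausq algebra_simps)
        show "0 \<le> \<tau>" using tau0 by simp
      qed
      have "S * (\<tau> * z) * Q \<le> S * (S * W / 2 * z) * Q"
      proof -
        have "S * z * Q \<le> 0" using S0 False Q0 by (simp add: mult_nonneg_nonpos mult_nonpos_nonneg)
        then have "(S * z * Q) * \<tau> \<le> (S * z * Q) * (S * W / 2)" by (rule mult_left_mono_neg[OF tau_ge])
        then show ?thesis by (simp add: algebra_simps)
      qed
      then have "L \<le> S\<^sup>2 * (W / 2) * ((z + kk) * Q)"
        unfolding L_def cW by (simp add: algebra_simps power2_eq_square)
      also have "\<dots> \<le> S\<^sup>2 * (W / 2) * (kk / 2)"
        using keyQ W0 by (intro mult_left_mono) auto
      also have "\<dots> = S\<^sup>2 * c / 2" by (simp add: cW)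
      also have "\<dots> \<le> 2 * N2 * c / 2" using S2 c0 by (intro divide_right_mono mult_right_mono) auto
      also have "\<dots> = c * N2" by simp
      finally show ?thesis .
    qed
    then have "S * Q * (N2 / 4) \<le> (4 * c) * (N2 / 4)" using L_eq by simp
    then show ?thesis using N2pos by simp
  qed
  then show ?thesis unfolding S_def Q_def z_def N2_def \<tau>_def .
qed



lemma PAY:
  fixes \<sigma> r :: real and a b :: "real \<times> real"
  assumes s: "\<sigma> > 0" and r: "r\<^sup>2 < 1" and ne: "a \<noteq> b"
  shows "payoffK \<sigma> \<sigma> r a b =
    (fst a + snd a) * (1 - Qf (((fst b)\<^sup>2 + (snd b)\<^sup>2 - (fst a)\<^sup>2 - (snd a)\<^sup>2) /
        (\<sigma> * sqrt ((2 * (fst b - fst a))\<^sup>2 + 2 * r * (2 * (fst b - fst a)) * (2 * (snd b - snd a)) + (2 * (snd b - snd a))\<^sup>2))))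
    + (fst b + snd b) * Qf (((fst b)\<^sup>2 + (snd b)\<^sup>2 - (fst a)\<^sup>2 - (snd a)\<^sup>2) /
        (\<sigma> * sqrt ((2 * (fst b - fst a))\<^sup>2 + 2 * r * (2 * (fst b - fst a)) * (2 * (snd b - snd a)) + (2 * (snd b - snd a))\<^sup>2)))"
proof -
  define \<alpha> where "\<alpha> = 2 * (fst b - fst a)"
  define \<beta> where "\<beta> = 2 * (snd b - snd a)"
  define D where "D = (fst b)\<^sup>2 + (snd b)\<^sup>2 - (fst a)\<^sup>2 - (snd a)\<^sup>2"
  define \<tau> where "\<tau> = \<sigma> * sqrt (\<alpha>\<^sup>2 + 2 * r * \<alpha> * \<beta> + \<beta>\<^sup>2)"
  have ab: "\<alpha> \<noteq> 0 \<or> \<beta> \<noteq> 0" using ne by (auto simp: \<alpha>_def \<beta>_def prod_eq_iff)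
  have ab': "- \<alpha> \<noteq> 0 \<or> - \<beta> \<noteq> 0" using ab by simp
  have m2: "measure (bvn \<sigma> \<sigma> r) (cellC2 a b) = Qf (D / \<tau>)"
    unfolding cell2_eq \<alpha>_def[symmetric] \<beta>_def[symmetric] D_def[symmetric] \<tau>_def
    by (rule HP[OF s r ab])
  have "measure (bvn \<sigma> \<sigma> r) (cellC1 a b) = Qf ((- D) / (\<sigma> * sqrt ((- \<alpha>)\<^sup>2 + 2 * r * (- \<alpha>) * (- \<beta>) + (- \<beta>)\<^sup>2)))"
    unfolding cell1_eq \<alpha>_def[symmetric] \<beta>_def[symmetric] D_def[symmetric]
    by (rule HP[OF s r ab'])
  also have "\<dots> = Qf (- (D / \<tau>))" unfolding \<tau>_def by simp
  also have "\<dots> = 1 - Qf (D / \<tau>)" by (rule Qf_sym)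
  finally have m1: "measure (bvn \<sigma> \<sigma> r) (cellC1 a b) = 1 - Qf (D / \<tau>)" .
  have "payoffK \<sigma> \<sigma> r a b = (fst a + snd a) * (1 - Qf (D / \<tau>)) + (fst b + snd b) * Qf (D / \<tau>)"
    unfolding payoffK_def using ne m1 m2 by simp
  then show ?thesis unfolding \<tau>_def \<alpha>_def \<beta>_def D_def .
qed

lemma xstar_eq:
  assumes s: "\<sigma> > 0" and r: "0 < r"
  shows "xstar \<sigma> \<sigma> r = kk * (\<sigma> * sqrt (2 * (1 + r))) / 2"
proof -
  have "2 * pi * (\<sigma>\<^sup>2 + 2 * r * \<sigma> * \<sigma> + \<sigma>\<^sup>2) = (2 * pi) * (\<sigma>\<^sup>2 * (2 * (1 + r)))"
    by (simp add: algebra_simps power2_eq_square)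
  then have "sqrt (2 * pi * (\<sigma>\<^sup>2 + 2 * r * \<sigma> * \<sigma> + \<sigma>\<^sup>2)) = sqrt (2 * pi) * (\<sigma> * sqrt (2 * (1 + r)))"
    using s by (simp add: real_sqrt_mult)
  then show ?thesis unfolding xstar_def kk_def by simp
qed



lemma main_aux:
  fixes \<sigma> r :: real
  assumes s: "\<sigma> > 0" and r0: "0 < r" and r1: "r < 1"
  shows "(\<forall>a b :: real \<times> real.
            payoffK \<sigma> \<sigma> r (- xstar \<sigma> \<sigma> r, - xstar \<sigma> \<sigma> r) b
              \<le> payoffK \<sigma> \<sigma> r (- xstar \<sigma> \<sigma> r, - xstar \<sigma> \<sigma> r) (xstar \<sigma> \<sigma> r, xstar \<sigma> \<sigma> r)
          \<and> payoffK \<sigma> \<sigma> r (- xstar \<sigma> \<sigma> r, - xstar \<sigma> \<sigma> r) (xstar \<sigma> \<sigma> r, xstar \<sigma> \<sigma> r) = 0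
          \<and> 0 \<le> payoffK \<sigma> \<sigma> r a (xstar \<sigma> \<sigma> r, xstar \<sigma> \<sigma> r))"
proof -
  define c where "c = xstar \<sigma> \<sigma> r"
  have c_eq: "c = kk * (\<sigma> * sqrt (2 * (1 + r))) / 2" unfolding c_def using s r0 by (rule xstar_eq)
  have c0: "c > 0" unfolding c_eq using kk_pos s r0 by simp
  have "r * r < 1 * 1" by (rule mult_strict_mono) (use r0 r1 in auto)
  then have r2: "r\<^sup>2 < 1" by (simp add: power2_eq_square)
  have gen: "payoffK \<sigma> \<sigma> r a b = (fst a + snd a) * (1 - Qf (D / \<tau>)) + (fst b + snd b) * Qf (D / \<tau>)
     \<and> (\<alpha> + \<beta>) * Qf (((\<alpha>\<^sup>2 + \<beta>\<^sup>2) / 4 - c * (\<alpha> + \<beta>)) / \<tau>) \<le> 4 * c"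
    if ne: "a \<noteq> b" and \<alpha>_def: "\<alpha> = 2 * (fst b - fst a)" and \<beta>_def: "\<beta> = 2 * (snd b - snd a)"
      and D_def: "D = (fst b)\<^sup>2 + (snd b)\<^sup>2 - (fst a)\<^sup>2 - (snd a)\<^sup>2"
      and \<tau>_def: "\<tau> = \<sigma> * sqrt (\<alpha>\<^sup>2 + 2 * r * \<alpha> * \<beta> + \<beta>\<^sup>2)" for a b \<alpha> \<beta> D \<tau>
  proof
    show "payoffK \<sigma> \<sigma> r a b = (fst a + snd a) * (1 - Qf (D / \<tau>)) + (fst b + snd b) * Qf (D / \<tau>)"
      using PAY[OF s r2 ne] unfolding \<alpha>_def \<beta>_def D_def \<tau>_def .
    have ab: "\<alpha> \<noteq> 0 \<or> \<beta> \<noteq> 0" using ne by (auto simp: \<alpha>_def \<beta>_def prod_eq_iff)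
    show "(\<alpha> + \<beta>) * Qf (((\<alpha>\<^sup>2 + \<beta>\<^sup>2) / 4 - c * (\<alpha> + \<beta>)) / \<tau>) \<le> 4 * c"
      unfolding \<tau>_def by (rule KEY[OF s r0 r1 ab c_eq])
  qed
  have P2: "payoffK \<sigma> \<sigma> r (-c, -c) (c, c) = 0"
  proof -
    have ne: "(-c, -c) \<noteq> (c, c)" using c0 by simp
    have "payoffK \<sigma> \<sigma> r (-c, -c) (c, c) = (-c + -c) * (1 - Qf (0 / \<sigma>)) + (c + c) * Qf (0 / \<sigma>)"
      using gen[OF ne refl refl refl refl] by simp
    then show ?thesis by (simp add: Qf0)
  qed
  have P1: "payoffK \<sigma> \<sigma> r (-c, -c) b \<le> 0" for b
  proof (cases "b = (-c, -c)")
    case True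
    then show ?thesis using c0 by (simp add: payoffK_def)
  next
    case False
    then have ne: "(-c, -c) \<noteq> b" by auto
    define \<alpha> where "\<alpha> = 2 * (fst b - fst (-c, -c))"
    define \<beta> where "\<beta> = 2 * (snd b - snd (-c, -c))"
    define D where "D = (fst b)\<^sup>2 + (snd b)\<^sup>2 - (fst (-c, -c))\<^sup>2 - (snd (-c, -c))\<^sup>2"
    define \<tau> where "\<tau> = \<sigma> * sqrt (\<alpha>\<^sup>2 + 2 * r * \<alpha> * \<beta> + \<beta>\<^sup>2)"
    note g = gen[OF ne \<alpha>_def \<beta>_def D_def \<tau>_def]
    have Deq: "(\<alpha>\<^sup>2 + \<beta>\<^sup>2) / 4 - c * (\<alpha> + \<beta>) = D"
    proof -
      have "\<alpha>\<^sup>2 + \<beta>\<^sup>2 - 4 * c * (\<alpha> + \<beta>) = 4 * D" unfolding \<alpha>_def \<beta>_def D_def fst_conv snd_conv by algebra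
      then show ?thesis by (simp add: field_simps)
    qed
    define q where "q = Qf (D / \<tau>)"
    have K: "payoffK \<sigma> \<sigma> r (-c, -c) b = -2 * c + ((\<alpha> + \<beta>) * q) / 2"
      using g unfolding q_def[symmetric] by (simp add: \<alpha>_def \<beta>_def algebra_simps)
    have "(\<alpha> + \<beta>) * q \<le> 4 * c" using g unfolding Deq q_def by simp
    then show ?thesis unfolding K by simp
  qed
  have P3: "0 \<le> payoffK \<sigma> \<sigma> r a (c, c)" for a
  proof (cases "a = (c, c)")
    case True
    then show ?thesis using c0 by (simp add: payoffK_def)
  next
    case False
    then have ne: "a \<noteq> (c, c)" by auto
    define \<alpha> where "\<alpha> = 2 * (fst (c, c) - fst a)"
    define \<beta> where "\<beta> = 2 * (snd (c, c) - snd a)"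
    define D where "D = (fst (c, c))\<^sup>2 + (snd (c, c))\<^sup>2 - (fst a)\<^sup>2 - (snd a)\<^sup>2"
    define \<tau> where "\<tau> = \<sigma> * sqrt (\<alpha>\<^sup>2 + 2 * r * \<alpha> * \<beta> + \<beta>\<^sup>2)"
    note g = gen[OF ne \<alpha>_def \<beta>_def D_def \<tau>_def]
    have Deq: "(\<alpha>\<^sup>2 + \<beta>\<^sup>2) / 4 - c * (\<alpha> + \<beta>) = - D"
    proof -
      have "\<alpha>\<^sup>2 + \<beta>\<^sup>2 - 4 * c * (\<alpha> + \<beta>) = 4 * (- D)" unfolding \<alpha>_def \<beta>_def D_def fst_conv snd_conv by algebra
      then show ?thesis by (simp add: field_simps)
    qed
    define q where "q = Qf (- (D / \<tau>))"
    have q1: "Qf (D / \<tau>) = 1 - q" unfolding q_def Qf_sym by simp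
    have g1: "payoffK \<sigma> \<sigma> r a (c, c) = (fst a + snd a) * (1 - Qf (D / \<tau>)) + (fst (c, c) + snd (c, c)) * Qf (D / \<tau>)"
      using g by (rule conjunct1)
    have K: "payoffK \<sigma> \<sigma> r a (c, c) = 2 * c - ((\<alpha> + \<beta>) * q) / 2"
      unfolding g1 q1 \<alpha>_def \<beta>_def by (simp add: field_simps)
    have "(\<alpha> + \<beta>) * q \<le> 4 * c" using g unfolding Deq q_def by simp
    then show ?thesis unfolding K by simp
  qed
  show ?thesis unfolding c_def[symmetric] using P1 P2 P3 by simp
qed


theorem mainTheorem8:
  fixes sx sy r :: real
  assumes "sx > 0" and "sy > 0" and "sx = sy" and "0 < r" and "r < 1"
  shows "(\<forall>a b :: real \<times> real.
            payoffK sx sy r (- xstar sx sy r, - xstar sx sy r) b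
              \<le> payoffK sx sy r (- xstar sx sy r, - xstar sx sy r) (xstar sx sy r, xstar sx sy r)
          \<and> payoffK sx sy r (- xstar sx sy r, - xstar sx sy r) (xstar sx sy r, xstar sx sy r) = 0
          \<and> 0 \<le> payoffK sx sy r a (xstar sx sy r, xstar sx sy r))"
proof -
  from assms(3) have e: "sy = sx" by simp
  show ?thesis unfolding e using main_aux[OF assms(1) assms(4) assms(5)] .
qed

end
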